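(* Let $\alpha_1\neq0$ and $b>3/8$. Then there is a constant $C$ depending only on $\alpha_1$ and $b$ such that for all $P,Q\in\mathbb R$ and all functions $\tilde u,\tilde v:\mathbb R\times\mathbb Z\to\mathbb C$, $$\big\||\tilde u|*_{\tau,k_1}|\tilde v|\big\|_{\ell^2_{k_1}L^2_\tau}\le C\,\big\|\langle\tau+(\alpha_1k_1+P)^3\rangle^b\tilde u(\tau,k_1)\big\|_{\ell^2_{k_1}L^2_\tau}\big\|\langle\tau+(\alpha_1k_1+Q)^3\rangle^b\tilde v(\tau,k_1)\big\|_{\ell^2_{k_1}L^2_\tau}.$$
   Context: $\langle x\rangle=(1+|x|^2)^{1/2}$. The convolution on $\mathbb R\times\mathbb Z$ is $$(|\tilde u|*_{\tau,k_1}|\tilde v|)(\tau,k_1)=\sum_{k_1'\in\mathbb Z}\int_{\mathbb R}|\tilde u(\tau-\tau',k_1-k_1')||\tilde v(\tau',k_1')|\,d\tau'.$$ *)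

theory Defs
  imports "HOL-Analysis.Analysis"
begin

definition japanese :: "real \<Rightarrow> real" where
  "japanese x = sqrt (1 + x\<^sup>2)"

definition ennsqrt :: "ennreal \<Rightarrow> ennreal" where
  "ennsqrt x = (if x = top then top else ennreal (sqrt (enn2real x)))"

definition l2L2 :: "(real \<Rightarrow> int \<Rightarrow> complex) \<Rightarrow> ennreal" where
  "l2L2 f = ennsqrt (\<integral>\<^sup>+ k. (\<integral>\<^sup>+ \<tau>. ennreal ((cmod (f \<tau> k))\<^sup>2) \<partial>lborel) \<partial>count_space UNIV)"

definition l2L2e :: "(real \<Rightarrow> int \<Rightarrow> ennreal) \<Rightarrow> ennreal" where
  "l2L2e F = ennsqrt (\<integral>\<^sup>+ k. (\<integral>\<^sup>+ \<tau>. (F \<tau> k)\<^sup>2 \<partial>lborel) \<partial>count_space UNIV)"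

definition absconv :: "(real \<Rightarrow> int \<Rightarrow> complex) \<Rightarrow> (real \<Rightarrow> int \<Rightarrow> complex) \<Rightarrow> real \<Rightarrow> int \<Rightarrow> ennreal" where
  "absconv u v \<tau> k = (\<integral>\<^sup>+ k'. (\<integral>\<^sup>+ \<tau>'. ennreal (cmod (u (\<tau> - \<tau>') (k - k')) * cmod (v \<tau>' k')) \<partial>lborel) \<partial>count_space UNIV)"

end

theory Submission
  imports Defs
begin

lemma enn_sq_le_iff: "(x::ennreal)^2 \<le> y^2 \<longleftrightarrow> x \<le> y"
proof (cases x; cases y)
  fix a b assume a: "x = ennreal a" "0 \<le> a" and b: "y = ennreal b" "0 \<le> b"
  then show ?thesis
    by (simp add: ennreal_power)
qed (auto simp: ennreal_power top_unique)

lemma ennsqrt_sq[simp]: "(ennsqrt x)^2 = x"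
  unfolding ennsqrt_def
  by (cases x) (auto simp: ennreal_power)

lemma ennsqrt_le_iff: "ennsqrt x \<le> ennsqrt y \<longleftrightarrow> x \<le> y"
  by (metis enn_sq_le_iff ennsqrt_sq)

lemma ennsqrt_of_sq[simp]: "ennsqrt (x^2) = x"
  by (metis enn_sq_le_iff ennsqrt_sq order_antisym order_refl)

lemma ennsqrt_mult: "ennsqrt (x*y) = ennsqrt x * ennsqrt y"
  by (metis ennsqrt_of_sq ennsqrt_sq power_mult_distrib)

lemma le_ennsqrt: "a^2 \<le> x \<Longrightarrow> a \<le> ennsqrt x"
  by (metis enn_sq_le_iff ennsqrt_sq)

lemma CS: assumes "f \<in> borel_measurable M" "g \<in> borel_measurable M"
  shows "(\<integral>\<^sup>+x. f x * g x \<partial>M) \<le> ennsqrt (\<integral>\<^sup>+x. f x ^ 2 \<partial>M) * ennsqrt (\<integral>\<^sup>+x. g x ^ 2 \<partial>M)"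
  unfolding ennsqrt_mult[symmetric] by (rule le_ennsqrt) (rule Cauchy_Schwarz_nn_integral[OF assms])

lemma meas_count_int:
  fixes h :: "'i::countable \<Rightarrow> 'a \<Rightarrow> ennreal"
  assumes "\<And>i. h i \<in> borel_measurable M"
  shows "(\<lambda>x. \<integral>\<^sup>+i. h i x \<partial>count_space UNIV) \<in> borel_measurable M"
proof -
  interpret S: sigma_finite_measure "count_space (UNIV::'i set)"
    by (rule sigma_finite_measure_count_space_countable) simp
  have "(\<lambda>p. h (snd p) (fst p)) \<in> borel_measurable (M \<Otimes>\<^sub>M count_space UNIV)"
    by (rule measurable_compose_countable'[where f="\<lambda>i p. h i (fst p)" and g=snd and I=UNIV])
       (auto intro: measurable_compose[OF measurable_fst assms])
  then have "case_prod (\<lambda>x i. h i x) \<in> borel_measurable (M \<Otimes>\<^sub>M count_space UNIV)"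
    by (simp add: case_prod_unfold)
  then show ?thesis by (rule S.borel_measurable_nn_integral)
qed

lemma transl: fixes h :: "real \<Rightarrow> ennreal" assumes "h \<in> borel_measurable borel"
  shows "(\<integral>\<^sup>+\<tau>. h (\<tau> - t) \<partial>lborel) = (\<integral>\<^sup>+\<tau>. h \<tau> \<partial>lborel)"
  using nn_integral_real_affine[OF assms, of 1 "-t"] by simp

lemma shift_int: "(\<integral>\<^sup>+k. h (k - j) \<partial>count_space UNIV) = (\<integral>\<^sup>+k. h (k::int) \<partial>count_space UNIV)"
  by (rule nn_integral_bij_count_space[of "\<lambda>k. k - j"]) (auto simp: bij_betw_def inj_on_def image_iff intro!: exI[of _ "_ + j"])

lemma refl_int: "(\<integral>\<^sup>+k'. h (k - k') \<partial>count_space UNIV) = (\<integral>\<^sup>+k. h (k::int) \<partial>count_space UNIV)"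
  by (rule nn_integral_bij_count_space[of "\<lambda>k'. k - k'"]) (auto simp: bij_betw_def inj_on_def image_iff intro!: exI[of _ "k - _"])

lemma sq_int: "(\<integral>\<^sup>+x. h x \<partial>count_space UNIV)^2 = (\<integral>\<^sup>+x. \<integral>\<^sup>+y. h x * h y \<partial>count_space UNIV \<partial>count_space UNIV)"
proof -
  have "(\<integral>\<^sup>+x. h x \<partial>count_space UNIV)^2 = (\<integral>\<^sup>+x. h x * (\<integral>\<^sup>+y. h y \<partial>count_space UNIV) \<partial>count_space UNIV)"
    by (simp add: power2_eq_square nn_integral_multc)
  also have "\<dots> = (\<integral>\<^sup>+x. \<integral>\<^sup>+y. h x * h y \<partial>count_space UNIV \<partial>count_space UNIV)"
    by (simp add: nn_integral_cmult)
  finally show ?thesis .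
qed

lemma meas_shift:
  fixes \<phi> :: "real \<Rightarrow> int \<Rightarrow> real"
  assumes "\<And>j. (\<lambda>\<tau>. \<phi> \<tau> j) \<in> borel_measurable borel"
  shows "(\<lambda>\<tau>'. \<phi> (\<tau> - \<tau>') j) \<in> borel_measurable lborel"
    "(\<lambda>\<tau>'. \<phi> \<tau>' j) \<in> borel_measurable lborel"
    "(\<lambda>p::real\<times>real. \<phi> (fst p - snd p) j) \<in> borel_measurable (lborel \<Otimes>\<^sub>M lborel)"
    "(\<lambda>p::real\<times>real. \<phi> (snd p) j) \<in> borel_measurable (lborel \<Otimes>\<^sub>M lborel)"
    "(\<lambda>\<tau>'. \<phi> (\<tau>' - \<tau>) j) \<in> borel_measurable lborel"
    "(\<lambda>\<tau>'. \<phi> (\<tau>' - \<tau>) j) \<in> borel_measurable borel"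
  by (rule measurable_compose[OF _ assms]; simp cong: measurable_cong_sets)+

lemma bilinear:
  fixes f g ku kv :: "real \<Rightarrow> int \<Rightarrow> real" and m :: "real \<Rightarrow> int \<Rightarrow> int \<Rightarrow> ennreal"
    and Bad :: "int set" and C0 C1 :: real
  assumes nnf: "\<And>\<tau> j. 0 \<le> f \<tau> j" and nng: "\<And>\<tau> j. 0 \<le> g \<tau> j"
    and nnu: "\<And>\<tau> j. 0 \<le> ku \<tau> j" and nnv: "\<And>\<tau> j. 0 \<le> kv \<tau> j"
    and fm: "\<And>j. (\<lambda>\<tau>. f \<tau> j) \<in> borel_measurable borel"
    and gm: "\<And>j. (\<lambda>\<tau>. g \<tau> j) \<in> borel_measurable borel"
    and um: "\<And>j. (\<lambda>\<tau>. ku \<tau> j) \<in> borel_measurable borel"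
    and vm: "\<And>j. (\<lambda>\<tau>. kv \<tau> j) \<in> borel_measurable borel"
    and kern: "\<And>\<tau> k k'. (\<integral>\<^sup>+\<tau>'. ennreal ((ku (\<tau>-\<tau>') (k-k') * kv \<tau>' k')^2) \<partial>lborel) \<le> m \<tau> k k'"
    and good: "\<And>\<tau> k. k \<notin> Bad \<Longrightarrow> (\<integral>\<^sup>+k'. m \<tau> k k' \<partial>count_space UNIV) \<le> ennreal C0"
    and allb: "\<And>\<tau> k k'. m \<tau> k k' \<le> ennreal C1"
    and bad: "\<And>k1 k2. k1 \<in> Bad \<Longrightarrow> k2 \<in> Bad \<Longrightarrow> k1 = k2"
    and C0: "0 \<le> C0" and C1: "0 \<le> C1"
  shows "(\<integral>\<^sup>+k. \<integral>\<^sup>+\<tau>. (\<integral>\<^sup>+k'. \<integral>\<^sup>+\<tau>'. ennreal (f (\<tau>-\<tau>') (k-k') * ku (\<tau>-\<tau>') (k-k') * (g \<tau>' k' * kv \<tau>' k')) \<partial>lborel \<partial>count_space UNIV)^2 \<partial>lborel \<partial>count_space UNIV)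
     \<le> ennreal (C0 + C1) * (\<integral>\<^sup>+k. \<integral>\<^sup>+\<tau>. ennreal ((f \<tau> k)^2) \<partial>lborel \<partial>count_space UNIV) * (\<integral>\<^sup>+k. \<integral>\<^sup>+\<tau>. ennreal ((g \<tau> k)^2) \<partial>lborel \<partial>count_space UNIV)"
proof -
  define NF where "NF j = (\<integral>\<^sup>+\<tau>. ennreal ((f \<tau> j)^2) \<partial>lborel)" for j
  define NG where "NG j = (\<integral>\<^sup>+\<tau>. ennreal ((g \<tau> j)^2) \<partial>lborel)" for j
  define I where "I \<tau> k k' = (\<integral>\<^sup>+\<tau>'. ennreal (f (\<tau>-\<tau>') (k-k') * ku (\<tau>-\<tau>') (k-k') * (g \<tau>' k' * kv \<tau>' k')) \<partial>lborel)" for \<tau> k k'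
  define H where "H \<tau> k k' = (\<integral>\<^sup>+\<tau>'. ennreal ((f (\<tau>-\<tau>') (k-k') * g \<tau>' k')^2) \<partial>lborel)" for \<tau> k k'
  define Nf where "Nf = (\<integral>\<^sup>+k. NF k \<partial>count_space UNIV)"
  define Ng where "Ng = (\<integral>\<^sup>+k. NG k \<partial>count_space UNIV)"
  note fM = meas_shift[OF fm] and gM = meas_shift[OF gm] and uM = meas_shift[OF um] and vM = meas_shift[OF vm]
  have Im: "(\<lambda>\<tau>. I \<tau> k k') \<in> borel_measurable lborel" for k k'
  proof -
    have "(\<lambda>p::real\<times>real. ennreal (f (fst p - snd p) (k-k') * ku (fst p - snd p) (k-k') * (g (snd p) k' * kv (snd p) k'))) \<in> borel_measurable (lborel \<Otimes>\<^sub>M lborel)"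
      using fM(3) uM(3) gM(4) vM(4) by simp
    then show ?thesis unfolding I_def by (intro lborel.borel_measurable_nn_integral) (simp add: case_prod_unfold)
  qed
  have Hm: "(\<lambda>\<tau>. H \<tau> k k') \<in> borel_measurable lborel" for k k'
  proof -
    have "(\<lambda>p::real\<times>real. ennreal ((f (fst p - snd p) (k-k') * g (snd p) k')^2)) \<in> borel_measurable (lborel \<Otimes>\<^sub>M lborel)"
      using fM(3) gM(4) by simp
    then show ?thesis unfolding H_def by (intro lborel.borel_measurable_nn_integral) (simp add: case_prod_unfold)
  qed
  have Hm': "(\<lambda>\<tau>. H \<tau> k k') \<in> borel_measurable borel" for k k'
    using Hm[of k k'] by simp
  have Im': "(\<lambda>\<tau>. I \<tau> k k') \<in> borel_measurable borel" for k k'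
    using Im[of k k'] by simp
  have Hint: "(\<integral>\<^sup>+\<tau>. H \<tau> k k' \<partial>lborel) = NF (k-k') * NG k'" for k k'
  proof -
    have "(\<integral>\<^sup>+\<tau>. H \<tau> k k' \<partial>lborel) = (\<integral>\<^sup>+\<tau>'. \<integral>\<^sup>+\<tau>. ennreal ((f (\<tau>-\<tau>') (k-k') * g \<tau>' k')^2) \<partial>lborel \<partial>lborel)"
      unfolding H_def
      by (rule lborel_pair.Fubini'[symmetric]) (use fM(3) gM(4) in \<open>simp add: case_prod_unfold\<close>)
    also have "\<dots> = (\<integral>\<^sup>+\<tau>'. (\<integral>\<^sup>+\<tau>. ennreal ((f (\<tau>-\<tau>') (k-k'))^2) \<partial>lborel) * ennreal ((g \<tau>' k')^2) \<partial>lborel)"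
    proof (intro nn_integral_cong)
      fix x
      have "(\<integral>\<^sup>+\<tau>. ennreal ((f (\<tau>-x) (k-k') * g x k')^2) \<partial>lborel) = (\<integral>\<^sup>+\<tau>. ennreal ((f (\<tau>-x) (k-k'))^2) * ennreal ((g x k')^2) \<partial>lborel)"
        by (simp add: power_mult_distrib ennreal_mult)
      also have "\<dots> = (\<integral>\<^sup>+\<tau>. ennreal ((f (\<tau>-x) (k-k'))^2) \<partial>lborel) * ennreal ((g x k')^2)"
        by (rule nn_integral_multc) (use fM(6) in simp)
      finally show "(\<integral>\<^sup>+\<tau>. ennreal ((f (\<tau>-x) (k-k') * g x k')^2) \<partial>lborel) = (\<integral>\<^sup>+\<tau>. ennreal ((f (\<tau>-x) (k-k'))^2) \<partial>lborel) * ennreal ((g x k')^2)" .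
    qed
    also have "\<dots> = (\<integral>\<^sup>+\<tau>'. NF (k-k') * ennreal ((g \<tau>' k')^2) \<partial>lborel)"
      unfolding NF_def
      by (intro nn_integral_cong arg_cong2[where f="(*)"] refl transl[where h="\<lambda>\<tau>. ennreal ((f \<tau> (k-k'))^2)"])
         (use fm in simp)
    also have "\<dots> = NF (k-k') * NG k'"
      unfolding NG_def by (rule nn_integral_cmult) (use gM(2) in simp)
    finally show ?thesis .
  qed
  have stepa: "I \<tau> k k' \<le> ennsqrt (H \<tau> k k') * ennsqrt (m \<tau> k k')" for \<tau> k k'
  proof -
    have "I \<tau> k k' = (\<integral>\<^sup>+\<tau>'. ennreal (f (\<tau>-\<tau>') (k-k') * g \<tau>' k') * ennreal (ku (\<tau>-\<tau>') (k-k') * kv \<tau>' k') \<partial>lborel)"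
      unfolding I_def by (intro nn_integral_cong) (simp add: ennreal_mult[symmetric] nnf nng nnu nnv mult_ac)
    also have "\<dots> \<le> ennsqrt (\<integral>\<^sup>+\<tau>'. (ennreal (f (\<tau>-\<tau>') (k-k') * g \<tau>' k'))^2 \<partial>lborel) * ennsqrt (\<integral>\<^sup>+\<tau>'. (ennreal (ku (\<tau>-\<tau>') (k-k') * kv \<tau>' k'))^2 \<partial>lborel)"
      by (rule CS; intro measurable_compose[OF _ measurable_ennreal] borel_measurable_times fM(1) gM(2) uM(1) vM(2))
    also have "\<dots> \<le> ennsqrt (H \<tau> k k') * ennsqrt (m \<tau> k k')"
      unfolding H_def
      by (intro mult_mono ennsqrt_le_iff[THEN iffD2] order_trans[OF _ kern] order_refl)
         (simp_all add: ennreal_power nnf nng nnu nnv)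
    finally show ?thesis .
  qed
  have Isq: "(I \<tau> k k')^2 \<le> H \<tau> k k' * ennreal C1" for \<tau> k k'
  proof -
    have "(I \<tau> k k')^2 \<le> (ennsqrt (H \<tau> k k') * ennsqrt (m \<tau> k k'))^2"
      using stepa enn_sq_le_iff by blast
    also have "\<dots> = H \<tau> k k' * m \<tau> k k'" by (simp add: power_mult_distrib)
    also have "\<dots> \<le> H \<tau> k k' * ennreal C1" by (intro mult_left_mono allb) simp
    finally show ?thesis .
  qed
  have goodb: "(\<integral>\<^sup>+k'. I \<tau> k k' \<partial>count_space UNIV)^2 \<le> ennreal C0 * (\<integral>\<^sup>+k'. H \<tau> k k' \<partial>count_space UNIV)"
    if "k \<notin> Bad" for \<tau> k
  proof -
    have "(\<integral>\<^sup>+k'. I \<tau> k k' \<partial>count_space UNIV)^2 \<le> (\<integral>\<^sup>+k'. ennsqrt (H \<tau> k k') * ennsqrt (m \<tau> k k') \<partial>count_space UNIV)^2"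
      by (subst enn_sq_le_iff) (intro nn_integral_mono stepa)
    also have "\<dots> \<le> (\<integral>\<^sup>+k'. (ennsqrt (H \<tau> k k'))^2 \<partial>count_space UNIV) * (\<integral>\<^sup>+k'. (ennsqrt (m \<tau> k k'))^2 \<partial>count_space UNIV)"
      by (rule Cauchy_Schwarz_nn_integral) simp_all
    also have "\<dots> \<le> (\<integral>\<^sup>+k'. H \<tau> k k' \<partial>count_space UNIV) * ennreal C0"
      using good[OF that] by (simp add: mult_left_mono)
    finally show ?thesis by (simp add: mult.commute)
  qed
  have badb: "(\<integral>\<^sup>+\<tau>. (\<integral>\<^sup>+k'. I \<tau> k k' \<partial>count_space UNIV)^2 \<partial>lborel) \<le> ennreal C1 * Nf * Ng" for k
  proof -
    define a where "a k' = ennsqrt (NF (k-k')) * ennsqrt (NG k')" for k'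
    have Ib: "ennsqrt (\<integral>\<^sup>+\<tau>. (I \<tau> k k')^2 \<partial>lborel) \<le> ennsqrt (ennreal C1) * a k'" for k'
    proof -
      have "(\<integral>\<^sup>+\<tau>. (I \<tau> k k')^2 \<partial>lborel) \<le> (\<integral>\<^sup>+\<tau>. H \<tau> k k' * ennreal C1 \<partial>lborel)"
        by (intro nn_integral_mono Isq)
      also have "\<dots> = ennreal C1 * (NF (k-k') * NG k')"
        by (subst nn_integral_multc) (simp_all add: Hm Hm' Hint mult.commute)
      finally show ?thesis unfolding a_def ennsqrt_mult[symmetric] ennsqrt_le_iff .
    qed
    have "(\<integral>\<^sup>+\<tau>. (\<integral>\<^sup>+k'. I \<tau> k k' \<partial>count_space UNIV)^2 \<partial>lborel)
        = (\<integral>\<^sup>+\<tau>. \<integral>\<^sup>+k'. \<integral>\<^sup>+l. I \<tau> k k' * I \<tau> k l \<partial>count_space UNIV \<partial>count_space UNIV \<partial>lborel)"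
      by (simp add: sq_int)
    also have "\<dots> = (\<integral>\<^sup>+k'. \<integral>\<^sup>+\<tau>. \<integral>\<^sup>+l. I \<tau> k k' * I \<tau> k l \<partial>count_space UNIV \<partial>lborel \<partial>count_space UNIV)"
      by (rule nn_integral_count_space_nn_integral) (auto intro!: meas_count_int borel_measurable_times_ennreal Im')
    also have "\<dots> = (\<integral>\<^sup>+k'. \<integral>\<^sup>+l. \<integral>\<^sup>+\<tau>. I \<tau> k k' * I \<tau> k l \<partial>lborel \<partial>count_space UNIV \<partial>count_space UNIV)"
      by (intro nn_integral_cong nn_integral_count_space_nn_integral) (auto intro!: borel_measurable_times_ennreal Im')
    also have "\<dots> \<le> (\<integral>\<^sup>+k'. \<integral>\<^sup>+l. (ennsqrt (ennreal C1) * a k') * (ennsqrt (ennreal C1) * a l) \<partial>count_space UNIV \<partial>count_space UNIV)"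
      by (intro nn_integral_mono order_trans[OF CS] mult_mono Ib) (simp_all add: Im Im')
    also have "\<dots> = (\<integral>\<^sup>+k'. ennsqrt (ennreal C1) * a k' \<partial>count_space UNIV)^2"
      by (simp add: sq_int)
    also have "\<dots> = ennreal C1 * (\<integral>\<^sup>+k'. a k' \<partial>count_space UNIV)^2"
      by (simp add: nn_integral_cmult power_mult_distrib)
    also have "\<dots> \<le> ennreal C1 * (Nf * Ng)"
    proof (intro mult_left_mono)
      have "(\<integral>\<^sup>+k'. a k' \<partial>count_space UNIV)^2 \<le> (\<integral>\<^sup>+k'. (ennsqrt (NF (k-k')))^2 \<partial>count_space UNIV) * (\<integral>\<^sup>+k'. (ennsqrt (NG k'))^2 \<partial>count_space UNIV)"
        unfolding a_def by (rule Cauchy_Schwarz_nn_integral) simp_all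
      also have "\<dots> = Nf * Ng" unfolding Nf_def Ng_def by (simp add: refl_int[where h=NF])
      finally show "(\<integral>\<^sup>+k'. a k' \<partial>count_space UNIV)^2 \<le> Nf * Ng" .
    qed simp
    finally show ?thesis by (simp add: mult.assoc)
  qed
  have goodint: "(\<integral>\<^sup>+\<tau>. \<integral>\<^sup>+k'. H \<tau> k k' \<partial>count_space UNIV \<partial>lborel) = (\<integral>\<^sup>+k'. NF (k-k') * NG k' \<partial>count_space UNIV)" for k
    by (subst nn_integral_count_space_nn_integral) (simp_all add: Hm Hm' Hint)
  have sumNN: "(\<integral>\<^sup>+k. \<integral>\<^sup>+k'. NF (k-k') * NG k' \<partial>count_space UNIV \<partial>count_space UNIV) = Nf * Ng"
  proof -
    have "(\<integral>\<^sup>+k. \<integral>\<^sup>+k'. NF (k-k') * NG k' \<partial>count_space UNIV \<partial>count_space UNIV)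
       = (\<integral>\<^sup>+k'. \<integral>\<^sup>+k. NF (k-k') * NG k' \<partial>count_space UNIV \<partial>count_space UNIV)"
      by (rule nn_integral_count_space_nn_integral) simp_all
    also have "\<dots> = (\<integral>\<^sup>+k'. Nf * NG k' \<partial>count_space UNIV)"
      by (intro nn_integral_cong) (simp add: nn_integral_multc shift_int[where h=NF] Nf_def)
    also have "\<dots> = Nf * Ng" by (simp add: nn_integral_cmult Ng_def)
    finally show ?thesis .
  qed
  have pw: "(\<integral>\<^sup>+\<tau>. (\<integral>\<^sup>+k'. I \<tau> k k' \<partial>count_space UNIV)^2 \<partial>lborel)
      \<le> ennreal C0 * (\<integral>\<^sup>+k'. NF (k-k') * NG k' \<partial>count_space UNIV) + (ennreal C1 * Nf * Ng) * indicator Bad k" for k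
  proof (cases "k \<in> Bad")
    case True
    then show ?thesis using badb[of k] by (simp add: add_increasing)
  next
    case False
    have "(\<integral>\<^sup>+\<tau>. (\<integral>\<^sup>+k'. I \<tau> k k' \<partial>count_space UNIV)^2 \<partial>lborel) \<le> (\<integral>\<^sup>+\<tau>. ennreal C0 * (\<integral>\<^sup>+k'. H \<tau> k k' \<partial>count_space UNIV) \<partial>lborel)"
      by (intro nn_integral_mono goodb False)
    also have "\<dots> = ennreal C0 * (\<integral>\<^sup>+k'. NF (k-k') * NG k' \<partial>count_space UNIV)"
      by (subst nn_integral_cmult) (auto intro!: meas_count_int simp: Hm Hm' goodint)
    finally show ?thesis using False by simp
  qed
  have badsum: "(\<integral>\<^sup>+k. c * indicator Bad k \<partial>count_space UNIV) \<le> c" for c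
  proof (cases "Bad = {}")
    case True then show ?thesis by simp
  next
    case False
    then obtain k0 where "k0 \<in> Bad" by auto
    then have "Bad = {k0}" using bad by auto
    then show ?thesis by simp
  qed
  have "(\<integral>\<^sup>+k. \<integral>\<^sup>+\<tau>. (\<integral>\<^sup>+k'. I \<tau> k k' \<partial>count_space UNIV)^2 \<partial>lborel \<partial>count_space UNIV)
      \<le> (\<integral>\<^sup>+k. ennreal C0 * (\<integral>\<^sup>+k'. NF (k-k') * NG k' \<partial>count_space UNIV) + (ennreal C1 * Nf * Ng) * indicator Bad k \<partial>count_space UNIV)"
    by (intro nn_integral_mono pw)
  also have "\<dots> = ennreal C0 * (Nf * Ng) + (\<integral>\<^sup>+k. (ennreal C1 * Nf * Ng) * indicator Bad k \<partial>count_space UNIV)"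
    by (subst nn_integral_add) (simp_all add: nn_integral_cmult sumNN)
  also have "\<dots> \<le> ennreal C0 * (Nf * Ng) + ennreal C1 * Nf * Ng"
    by (intro add_mono badsum order_refl)
  also have "\<dots> = ennreal (C0 + C1) * Nf * Ng"
    using C0 C1 by (simp add: ennreal_plus distrib_right mult.assoc)
  finally show ?thesis unfolding I_def Nf_def Ng_def NF_def NG_def .
qed

lemma even_int:
  fixes g :: "real \<Rightarrow> ennreal"
  assumes gm: "g \<in> borel_measurable borel" and ev: "\<And>x. g (-x) = g x"
  shows "(\<integral>\<^sup>+x. g x \<partial>lborel) \<le> 2 * (\<integral>\<^sup>+x. g x * indicator {0..} x \<partial>lborel)"
proof -
  have "(\<integral>\<^sup>+x. g x \<partial>lborel) = (\<integral>\<^sup>+x. g x * indicator {0..} x + g x * indicator {..<0} x \<partial>lborel)"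
    by (intro nn_integral_cong) (auto simp: indicator_def)
  also have "\<dots> = (\<integral>\<^sup>+x. g x * indicator {0..} x \<partial>lborel) + (\<integral>\<^sup>+x. g x * indicator {..<0} x \<partial>lborel)"
    by (rule nn_integral_add) (use gm in auto)
  also have "(\<integral>\<^sup>+x. g x * indicator {..<0} x \<partial>lborel) = (\<integral>\<^sup>+x. g (0 + (-1) * x) * indicator {..<0} (0 + (-1) * x) \<partial>lborel)"
    using nn_integral_real_affine[of "\<lambda>x. g x * indicator {..<0} x" "-1" 0] gm by simp
  also have "\<dots> \<le> (\<integral>\<^sup>+x. g x * indicator {0..} x \<partial>lborel)"
    by (intro nn_integral_mono) (auto simp: ev indicator_def)
  finally show ?thesis by (simp add: mult_2 add_mono)
qed

lemma int_near0:
  fixes r c :: real assumes r: "0 < r" "r < 1" and c: "0 < c"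
  shows "(\<integral>\<^sup>+y. ennreal (\<bar>y\<bar> powr (-r) * indicator {y. \<bar>y\<bar> < c} y) \<partial>lborel) \<le> ennreal (2 * (c powr (1-r) / (1-r)))"
proof -
  have "(\<integral>\<^sup>+y. ennreal (\<bar>y\<bar> powr (-r) * indicator {y. \<bar>y\<bar> < c} y) \<partial>lborel)
      \<le> 2 * (\<integral>\<^sup>+y. ennreal (\<bar>y\<bar> powr (-r) * indicator {y. \<bar>y\<bar> < c} y) * indicator {0..} y \<partial>lborel)"
    by (rule even_int) (auto simp: indicator_def)
  also have "(\<integral>\<^sup>+y. ennreal (\<bar>y\<bar> powr (-r) * indicator {y. \<bar>y\<bar> < c} y) * indicator {0..} y \<partial>lborel)
      \<le> (\<integral>\<^sup>+y. ennreal (indicator {0..c} y * y powr (-r)) \<partial>lborel)"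
    by (intro nn_integral_mono) (auto simp: indicator_def)
  also have "\<dots> = ennreal (c powr (-r + 1) / (-r + 1))"
    by (rule nn_integral_has_integral_lebesgue) (use has_integral_powr_from_0[of "-r" c] r c in auto)
  also have "2 * ennreal (c powr (-r + 1) / (-r + 1)) = ennreal (2 * (c powr (1-r) / (1-r)))"
    using r by (subst ennreal_mult) (auto simp: add.commute)
  finally show ?thesis by (simp add: mult_left_mono)
qed

lemma int_tail:
  fixes s d :: real assumes s: "1 < s" and d: "0 < d"
  shows "(\<integral>\<^sup>+y. ennreal (\<bar>y\<bar> powr (-s) * indicator {y. d \<le> \<bar>y\<bar>} y) \<partial>lborel) \<le> ennreal (2 * (d powr (1-s) / (s-1)))"
proof -
  have "(\<integral>\<^sup>+y. ennreal (\<bar>y\<bar> powr (-s) * indicator {y. d \<le> \<bar>y\<bar>} y) \<partial>lborel)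
      \<le> 2 * (\<integral>\<^sup>+y. ennreal (\<bar>y\<bar> powr (-s) * indicator {y. d \<le> \<bar>y\<bar>} y) * indicator {0..} y \<partial>lborel)"
    by (rule even_int) (auto simp: indicator_def)
  also have "(\<integral>\<^sup>+y. ennreal (\<bar>y\<bar> powr (-s) * indicator {y. d \<le> \<bar>y\<bar>} y) * indicator {0..} y \<partial>lborel)
      \<le> (\<integral>\<^sup>+y. ennreal (indicator {d..} y * y powr (-s)) \<partial>lborel)"
    by (intro nn_integral_mono) (use d in \<open>auto simp: indicator_def\<close>)
  also have "\<dots> = ennreal (-(d powr (-s + 1)) / (-s + 1))"
    by (rule nn_integral_has_integral_lebesgue) (use has_integral_powr_to_inf[of "-s" d] s d in auto)
  also have "2 * ennreal (-(d powr (-s + 1)) / (-s + 1)) = ennreal (2 * (d powr (1-s) / (s-1)))"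
    using s by (subst ennreal_mult) (auto simp: add.commute minus_divide_right)
  finally show ?thesis by (simp add: mult_left_mono)
qed

lemma jap_ge1: "1 \<le> japanese y"
  unfolding japanese_def by simp
lemma jap_ge_abs: "\<bar>y\<bar> \<le> japanese y"
  unfolding japanese_def by (simp add: real_le_rsqrt)
lemma jap_pos: "0 < japanese y"
  using jap_ge1[of y] by linarith

lemma powr_anti: fixes r a b :: real shows "0 < r \<Longrightarrow> 0 < a \<Longrightarrow> a \<le> b \<Longrightarrow> b powr (-r) \<le> a powr (-r)"
  using powr_mono2'[of "-r" a b] by auto

lemma pw:
  fixes r X x R :: real
  assumes r: "0 < r" and R: "R = max 1 \<bar>X\<bar>" and x0: "x \<noteq> 0" and xX: "x \<noteq> X"
  shows "japanese (X - x) powr (-r) * japanese x powr (-r)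
    \<le> 2 powr r * (\<bar>x\<bar> powr (-2*r) * indicator {x. 2*R \<le> \<bar>x\<bar>} x)
      + (R/2) powr (-r) * (\<bar>x\<bar> powr (-r) * indicator {x. \<bar>x\<bar> < 2*R} x + \<bar>X-x\<bar> powr (-r) * indicator {x. \<bar>X-x\<bar> < 3*R} x)"
    (is "?L \<le> ?A + ?B * (?C + ?D)")
proof -
  have nA: "0 \<le> ?A" and nB: "0 \<le> ?B" and nC: "0 \<le> ?C" and nD: "0 \<le> ?D"
    by (auto simp: indicator_def)
  have R1: "1 \<le> R" "\<bar>X\<bar> \<le> R" using R by auto
  have j1: "japanese (X - x) powr (-r) \<le> \<bar>X - x\<bar> powr (-r)"
    by (rule powr_anti) (use r xX jap_ge_abs in auto)
  have j2: "japanese x powr (-r) \<le> \<bar>x\<bar> powr (-r)"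
    by (rule powr_anti) (use r x0 jap_ge_abs in auto)
  have p1: "0 \<le> japanese (X - x) powr (-r)" "0 \<le> japanese x powr (-r)" by auto
  show ?thesis
  proof (cases "2*R \<le> \<bar>x\<bar>")
    case True
    have "\<bar>x\<bar>/2 \<le> \<bar>X - x\<bar>" using True R1 by linarith
    then have "japanese (X - x) powr (-r) \<le> (\<bar>x\<bar>/2) powr (-r)"
      using jap_ge_abs[of "X-x"] by (intro powr_anti) (use r x0 in auto)
    also have "(\<bar>x\<bar>/2) powr (-r) = 2 powr r * \<bar>x\<bar> powr (-r)"
      by (simp add: powr_divide powr_minus divide_simps)
    finally have "?L \<le> (2 powr r * \<bar>x\<bar> powr (-r)) * \<bar>x\<bar> powr (-r)"
      by (intro mult_mono j2) auto
    also have "\<dots> = ?A" using True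
      by (simp add: indicator_def mult.assoc powr_add[symmetric])
    finally show ?thesis using nB nC nD by (simp add: add_increasing2)
  next
    case False
    then have C: "?C = \<bar>x\<bar> powr (-r)" by (simp add: indicator_def)
    have "\<bar>X-x\<bar> < 3*R" using False R1 by linarith
    then have D: "?D = \<bar>X-x\<bar> powr (-r)" by (simp add: indicator_def)
    have R2: "0 < R/2" using R1 by simp
    have "R/2 \<le> japanese x \<or> R/2 \<le> japanese (X - x)"
      using jap_ge_abs[of x] jap_ge_abs[of "X-x"] jap_ge1[of x] R by (cases "1 \<le> \<bar>X\<bar>") (auto simp: max_def)
    then have "?L \<le> ?B * ?D \<or> ?L \<le> ?B * ?C"
    proof
      assume "R/2 \<le> japanese x"
      then have "japanese x powr (-r) \<le> ?B" by (rule powr_anti[OF r R2])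
      then have "?L \<le> \<bar>X-x\<bar> powr (-r) * ?B" by (intro mult_mono j1) auto
      then have "?L \<le> ?B * ?D" by (metis D mult.commute)
      then show ?thesis by (rule disjI1)
    next
      assume "R/2 \<le> japanese (X - x)"
      then have "japanese (X - x) powr (-r) \<le> ?B" by (rule powr_anti[OF r R2])
      then have "?L \<le> ?B * \<bar>x\<bar> powr (-r)" by (intro mult_mono j2) auto
      then have "?L \<le> ?B * ?C" by (metis C)
      then show ?thesis by (rule disjI2)
    qed
    moreover have "?B * ?D \<le> ?B * (?C + ?D)" "?B * ?C \<le> ?B * (?C + ?D)"
      using nB nC nD by (simp_all add: mult_left_mono)
    ultimately show ?thesis using nA by linarith
  qed
qed

definition Ck :: "real \<Rightarrow> real" where
  "Ck r = 2 powr r * (2 * 2 powr (1-2*r) / (2*r-1)) + 2 powr r * (2 * 2 powr (1-r) / (1-r) + 2 * 3 powr (1-r) / (1-r))"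

lemma Ck_pos: "1/2 < r \<Longrightarrow> r < 1 \<Longrightarrow> 0 \<le> Ck r"
  unfolding Ck_def by (intro add_nonneg_nonneg mult_nonneg_nonneg divide_nonneg_nonneg) auto

lemma enn_comb: "0 \<le> a \<Longrightarrow> 0 \<le> b \<Longrightarrow> 0 \<le> c \<Longrightarrow> 0 \<le> B \<Longrightarrow> 0 \<le> p \<Longrightarrow>
  ennreal p * ennreal a + (ennreal B * ennreal b + ennreal B * ennreal c) = ennreal (p*a + (B*b + B*c))"
  by (simp add: ennreal_plus ennreal_mult)

lemma kernel_int:
  fixes r X :: real
  assumes r: "1/2 < r" "r < 1"
  shows "(\<integral>\<^sup>+x. ennreal (japanese (X - x) powr (-r) * japanese x powr (-r)) \<partial>lborel) \<le> ennreal (Ck r * (max 1 \<bar>X\<bar>) powr (1-2*r))"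
proof -
  define R where "R = max 1 \<bar>X\<bar>"
  have R1: "1 \<le> R" by (simp add: R_def)
  define B where "B = (R/2) powr (-r)"
  have B0: "0 \<le> B" by (simp add: B_def)
  define A' where "A' x = \<bar>x\<bar> powr (-2*r) * indicator {x. 2*R \<le> \<bar>x\<bar>} x" for x :: real
  define C' where "C' x = \<bar>x\<bar> powr (-r) * indicator {x. \<bar>x\<bar> < 2*R} x" for x :: real
  define D' where "D' x = \<bar>X-x\<bar> powr (-r) * indicator {x. \<bar>X-x\<bar> < 3*R} x" for x :: real
  have mA: "(\<lambda>x. ennreal (A' x)) \<in> borel_measurable lborel" unfolding A'_def by measurable
  have mC: "(\<lambda>x. ennreal (C' x)) \<in> borel_measurable lborel" unfolding C'_def by measurable
  have mD: "(\<lambda>x. ennreal (D' x)) \<in> borel_measurable lborel" unfolding D'_def by measurable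
  have "(\<integral>\<^sup>+x. ennreal (japanese (X - x) powr (-r) * japanese x powr (-r)) \<partial>lborel)
      \<le> (\<integral>\<^sup>+x. ennreal (2 powr r) * ennreal (A' x) + (ennreal B * ennreal (C' x) + ennreal B * ennreal (D' x)) \<partial>lborel)"
  proof (rule nn_integral_mono_AE)
    show "AE x in lborel. ennreal (japanese (X - x) powr (-r) * japanese x powr (-r)) \<le> ennreal (2 powr r) * ennreal (A' x) + (ennreal B * ennreal (C' x) + ennreal B * ennreal (D' x))"
      using AE_lborel_singleton[of 0] AE_lborel_singleton[of X]
    proof eventually_elim
      case (elim x)
      have "japanese (X - x) powr (-r) * japanese x powr (-r) \<le> 2 powr r * A' x + B * (C' x + D' x)"
        unfolding A'_def B_def C'_def D'_def by (rule pw) (use r elim R_def in auto)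
      then have "ennreal (japanese (X - x) powr (-r) * japanese x powr (-r)) \<le> ennreal (2 powr r * A' x + B * (C' x + D' x))"
        by (rule ennreal_leI)
      also have "\<dots> = ennreal (2 powr r) * ennreal (A' x) + (ennreal B * ennreal (C' x) + ennreal B * ennreal (D' x))"
        using B0 by (simp add: A'_def C'_def D'_def ennreal_plus ennreal_mult distrib_left)
      finally show ?case .
    qed
  qed
  also have "\<dots> = ennreal (2 powr r) * (\<integral>\<^sup>+x. ennreal (A' x) \<partial>lborel) + (ennreal B * (\<integral>\<^sup>+x. ennreal (C' x) \<partial>lborel) + ennreal B * (\<integral>\<^sup>+x. ennreal (D' x) \<partial>lborel))"
    using mA mC mD by (simp add: nn_integral_add nn_integral_cmult)
  also have "\<dots> \<le> ennreal (2 powr r) * ennreal (2 * ((2*R) powr (1-2*r) / (2*r-1))) + (ennreal B * ennreal (2 * ((2*R) powr (1-r) / (1-r))) + ennreal B * ennreal (2 * ((3*R) powr (1-r) / (1-r))))"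
  proof (intro add_mono mult_left_mono order_refl)
    show "(\<integral>\<^sup>+x. ennreal (A' x) \<partial>lborel) \<le> ennreal (2 * ((2*R) powr (1-2*r) / (2*r-1)))"
      unfolding A'_def using int_tail[of "2*r" "2*R"] r R1 by simp
    show "(\<integral>\<^sup>+x. ennreal (C' x) \<partial>lborel) \<le> ennreal (2 * ((2*R) powr (1-r) / (1-r)))"
      unfolding C'_def using int_near0[of r "2*R"] r R1 by simp
    have "(\<integral>\<^sup>+y. ennreal (\<bar>y\<bar> powr (-r) * indicator {y. \<bar>y\<bar> < 3*R} y) \<partial>lborel)
        = (\<integral>\<^sup>+x. ennreal (\<bar>X + (-1)*x\<bar> powr (-r) * indicator {y. \<bar>y\<bar> < 3*R} (X + (-1)*x)) \<partial>lborel)"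
      using nn_integral_real_affine[of "\<lambda>y. ennreal (\<bar>y\<bar> powr (-r) * indicator {y. \<bar>y\<bar> < 3*R} y)" "-1" X]
      by simp
    also have "\<dots> = (\<integral>\<^sup>+x. ennreal (D' x) \<partial>lborel)"
      by (intro nn_integral_cong) (simp add: D'_def indicator_def)
    finally show "(\<integral>\<^sup>+x. ennreal (D' x) \<partial>lborel) \<le> ennreal (2 * ((3*R) powr (1-r) / (1-r)))"
      using int_near0[of r "3*R"] r R1 by simp
  qed auto
  also have "\<dots> = ennreal (2 powr r * (2 * ((2*R) powr (1-2*r) / (2*r-1))) + (B * (2 * ((2*R) powr (1-r) / (1-r))) + B * (2 * ((3*R) powr (1-r) / (1-r)))))"
    by (rule enn_comb) (use r R1 B0 in auto)
  also have "\<dots> = ennreal (Ck r * R powr (1-2*r))"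
  proof -
    have RR: "R powr (-r) * R powr (1-r) = R powr (1-2*r)"
      by (simp add: powr_add[symmetric])
    have Bd: "B = 2 powr r * R powr (-r)" unfolding B_def by (simp add: powr_divide powr_minus divide_simps)
    have e1: "B * (2 * ((2*R) powr (1-r) / (1-r))) = (2 powr r * (2 * 2 powr (1-r) / (1-r))) * (R powr (-r) * R powr (1-r))"
      unfolding Bd powr_mult by (simp add: field_simps)
    have e2: "B * (2 * ((3*R) powr (1-r) / (1-r))) = (2 powr r * (2 * 3 powr (1-r) / (1-r))) * (R powr (-r) * R powr (1-r))"
      unfolding Bd powr_mult by (simp add: field_simps)
    have e3: "2 powr r * (2 * ((2*R) powr (1-2*r) / (2*r-1))) = (2 powr r * (2 * 2 powr (1-2*r) / (2*r-1))) * R powr (1-2*r)"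
      unfolding powr_mult by (simp add: field_simps)
    show ?thesis unfolding e1 e2 e3 RR Ck_def by (simp add: distrib_right distrib_left add_divide_distrib)
  qed
  finally show ?thesis unfolding R_def .
qed

lemma int_split_nat:
  fixes h :: "int \<Rightarrow> ennreal"
  shows "(\<integral>\<^sup>+d. h d \<partial>count_space UNIV) = (\<integral>\<^sup>+j. h (int (j::nat)) \<partial>count_space UNIV) + (\<integral>\<^sup>+j. h (- int (j::nat) - 1) \<partial>count_space UNIV)"
proof -
  have "(\<integral>\<^sup>+d. h d \<partial>count_space UNIV) = (\<integral>\<^sup>+d. h d * indicator {0..} d + h d * indicator {..<0} d \<partial>count_space UNIV)"
    by (intro nn_integral_cong) (auto simp: indicator_def)
  also have "\<dots> = (\<integral>\<^sup>+d. h d * indicator {0..} d \<partial>count_space UNIV) + (\<integral>\<^sup>+d. h d * indicator {..<0} d \<partial>count_space UNIV)"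
    by (rule nn_integral_add) auto
  also have "(\<integral>\<^sup>+d. h d * indicator {0..} d \<partial>count_space UNIV) = (\<integral>\<^sup>+d. h d \<partial>count_space {0..})"
    by (simp add: nn_integral_count_space_indicator)
  also have "\<dots> = (\<integral>\<^sup>+j. h (int (j::nat)) \<partial>count_space UNIV)"
    by (rule nn_integral_bij_count_space[symmetric])
       (auto simp: bij_betw_def inj_on_def image_iff intro!: exI[of _ "nat _"])
  also have "(\<integral>\<^sup>+d. h d * indicator {..<0} d \<partial>count_space UNIV) = (\<integral>\<^sup>+d. h d \<partial>count_space {..<0})"
    by (simp add: nn_integral_count_space_indicator)
  also have "\<dots> = (\<integral>\<^sup>+j. h (- int (j::nat) - 1) \<partial>count_space UNIV)"
    by (rule nn_integral_bij_count_space[symmetric])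
       (auto simp: bij_betw_def inj_on_def image_iff intro!: exI[of _ "nat (- _ - 1)"])
  finally show ?thesis .
qed

lemma sum_bound:
  fixes c \<sigma> :: real
  assumes c: "0 < c" and s: "1/2 < \<sigma>"
  shows "\<exists>Cs\<ge>0. \<forall>(S::int set) (y::int \<Rightarrow> real). (\<forall>n\<in>S. \<forall>m\<in>S. c * (of_int (n-m))^2 \<le> \<bar>y n - y m\<bar>) \<longrightarrow>
     (\<integral>\<^sup>+n. ennreal (max 1 \<bar>y n\<bar> powr (-\<sigma>)) * indicator S n \<partial>count_space UNIV) \<le> ennreal Cs"
proof -
  define \<phi> where "\<phi> d = (if d = 0 then 1 else (c * (of_int d)^2 / 2) powr (-\<sigma>))" for d :: int
  have \<phi>0: "0 \<le> \<phi> d" for d by (simp add: \<phi>_def)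
  have \<phi>suc: "\<phi> (int (Suc j)) = (c/2) powr (-\<sigma>) * real (Suc j) powr (-2*\<sigma>)" for j
  proof -
    have "\<phi> (int (Suc j)) = (c/2 * (real (Suc j)) powr 2) powr (-\<sigma>)"
      unfolding \<phi>_def by (simp add: powr_realpow del: of_nat_Suc)
    also have "\<dots> = (c/2) powr (-\<sigma>) * real (Suc j) powr (-2*\<sigma>)"
      unfolding powr_mult powr_powr by (simp del: of_nat_Suc)
    finally show ?thesis .
  qed
  have sumsuc: "summable (\<lambda>j. \<phi> (int (Suc j)))"
  proof -
    have "summable (\<lambda>j. real j powr (-2*\<sigma>))" using s by (simp add: summable_real_powr_iff)
    then have "summable (\<lambda>j. real (Suc j) powr (-2*\<sigma>))" by (subst summable_Suc_iff)
    then show ?thesis unfolding \<phi>suc by (rule summable_mult)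
  qed
  have sum1: "summable (\<lambda>j. \<phi> (int j))" using sumsuc by (subst (asm) summable_Suc_iff) simp
  have sum2: "summable (\<lambda>j. \<phi> (- int j - 1))"
  proof -
    have "\<phi> (- int j - 1) = \<phi> (int (Suc j))" for j
      unfolding \<phi>_def by (simp add: power2_eq_square algebra_simps)
    then show ?thesis using sumsuc by simp
  qed
  define \<Phi> where "\<Phi> = (\<integral>\<^sup>+d. ennreal (\<phi> d) \<partial>count_space UNIV)"
  have "\<Phi> = ennreal (\<Sum>j. \<phi> (int j)) + ennreal (\<Sum>j. \<phi> (- int j - 1))"
    unfolding \<Phi>_def int_split_nat nn_integral_count_space_nat
    by (simp add: suminf_ennreal2 \<phi>0 sum1 sum2)
  then have \<Phi>fin: "\<Phi> \<noteq> top" by simp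
  show ?thesis
  proof (intro exI[of _ "enn2real \<Phi>"] conjI allI impI)
    show "0 \<le> enn2real \<Phi>" by simp
    fix S :: "int set" and y :: "int \<Rightarrow> real"
    assume sep: "\<forall>n\<in>S. \<forall>m\<in>S. c * (of_int (n-m))^2 \<le> \<bar>y n - y m\<bar>"
    show "(\<integral>\<^sup>+n. ennreal (max 1 \<bar>y n\<bar> powr (-\<sigma>)) * indicator S n \<partial>count_space UNIV) \<le> ennreal (enn2real \<Phi>)"
    proof (cases "S = {}")
      case True then show ?thesis by simp
    next
      case False
      then obtain n0 where n0: "n0 \<in> S" by auto
      define T where "T = {n\<in>S. \<bar>y n\<bar> \<le> \<bar>y n0\<bar>}"
      define M where "M = \<lceil>2 * \<bar>y n0\<bar> / c\<rceil>"
      have "T \<subseteq> {n0 - M .. n0 + M}"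
      proof
        fix n assume "n \<in> T"
        then have nS: "n \<in> S" and le: "\<bar>y n\<bar> \<le> \<bar>y n0\<bar>" by (auto simp: T_def)
        have "c * (of_int (n-n0))^2 \<le> 2 * \<bar>y n0\<bar>" using sep nS n0 le by force
        then have "(of_int (n-n0))^2 \<le> 2 * \<bar>y n0\<bar> / c" using c by (simp add: field_simps)
        then have "(of_int ((n-n0)^2)::real) \<le> of_int M" unfolding M_def by (smt (verit) of_int_power le_of_int_ceiling)
        then have "(n-n0)^2 \<le> M" by linarith
        moreover have "\<bar>n - n0\<bar> \<le> (n-n0)^2"
        proof (cases "n = n0")
          case False
          then have "1 \<le> \<bar>n - n0\<bar>" by linarith
          then have "\<bar>n - n0\<bar> * 1 \<le> \<bar>n - n0\<bar> * \<bar>n - n0\<bar>" by (intro mult_left_mono) auto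
          then show ?thesis by (simp add: power2_eq_square abs_mult_self_eq)
        qed simp
        ultimately show "n \<in> {n0 - M .. n0 + M}" by auto
      qed
      then have Tfin: "finite T" by (rule finite_subset) simp
      have Tne: "T \<noteq> {}" using n0 by (auto simp: T_def)
      define ns where "ns = arg_min_on (\<lambda>n. \<bar>y n\<bar>) T"
      have nsT: "ns \<in> T" and nsmin: "\<not>(\<exists>x\<in>T. \<bar>y x\<bar> < \<bar>y ns\<bar>)"
        using arg_min_if_finite[OF Tfin Tne, of "\<lambda>n. \<bar>y n\<bar>"] unfolding ns_def by auto
      have nsS: "ns \<in> S" using nsT by (simp add: T_def)
      have minS: "\<bar>y ns\<bar> \<le> \<bar>y n\<bar>" if "n \<in> S" for n
      proof (cases "n \<in> T")
        case True then show ?thesis using nsmin by force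
      next
        case False then have "\<bar>y n0\<bar> < \<bar>y n\<bar>" using that by (auto simp: T_def)
        moreover have "\<bar>y ns\<bar> \<le> \<bar>y n0\<bar>" using nsT by (simp add: T_def)
        ultimately show ?thesis by simp
      qed
      have pt: "ennreal (max 1 \<bar>y n\<bar> powr (-\<sigma>)) * indicator S n \<le> ennreal (\<phi> (n - ns))" for n
      proof (cases "n \<in> S")
        case False then show ?thesis by simp
      next
        case True
        have "max 1 \<bar>y n\<bar> powr (-\<sigma>) \<le> \<phi> (n - ns)"
        proof (cases "n = ns")
          case True
          have "max 1 \<bar>y n\<bar> powr (-\<sigma>) \<le> 1 powr (-\<sigma>)" by (rule powr_anti) (use s in auto)
          then show ?thesis using True by (simp add: \<phi>_def)
        next
          case False
          have "c * (of_int (n-ns))^2 \<le> \<bar>y n - y ns\<bar>" using sep True nsS by blast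
          also have "\<dots> \<le> 2 * \<bar>y n\<bar>" using minS[OF True] by linarith
          finally have "c * (of_int (n-ns))^2 / 2 \<le> max 1 \<bar>y n\<bar>" by simp
          moreover have "0 < c * (of_int (n-ns))^2 / 2" using False c by simp
          ultimately have "max 1 \<bar>y n\<bar> powr (-\<sigma>) \<le> (c * (of_int (n-ns))^2 / 2) powr (-\<sigma>)"
            by (intro powr_anti) (use s in auto)
          then show ?thesis using False by (simp add: \<phi>_def)
        qed
        then show ?thesis using True by (simp add: ennreal_leI)
      qed
      have "(\<integral>\<^sup>+n. ennreal (max 1 \<bar>y n\<bar> powr (-\<sigma>)) * indicator S n \<partial>count_space UNIV) \<le> (\<integral>\<^sup>+n. ennreal (\<phi> (n - ns)) \<partial>count_space UNIV)"
        by (intro nn_integral_mono pt)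
      also have "\<dots> = \<Phi>" unfolding \<Phi>_def by (rule shift_int)
      finally show ?thesis using \<Phi>fin by (simp add: ennreal_enn2real_if)
    qed
  qed
qed

lemma cubic_diff:
  fixes A Q \<alpha> n m :: real
  shows "((A - \<alpha>*n)^3 + (\<alpha>*n + Q)^3) - ((A - \<alpha>*m)^3 + (\<alpha>*m + Q)^3)
     = (n - m) * (3*\<alpha>^2*(A+Q)*(n+m) + 3*\<alpha>*(Q^2 - A^2))"
  by (simp add: power3_eq_cube power2_eq_square algebra_simps)

lemma branch_sep:
  fixes a \<beta> n m :: real
  assumes "(0 \<le> 2*a*n + \<beta> \<and> 0 \<le> 2*a*m + \<beta>) \<or> (2*a*n + \<beta> < 0 \<and> 2*a*m + \<beta> < 0)"
  shows "\<bar>a\<bar> * (n - m)^2 \<le> \<bar>(n - m) * (a*(n+m) + \<beta>)\<bar>"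
proof -
  have "\<bar>a * (n - m)\<bar> \<le> \<bar>a*(n+m) + \<beta>\<bar>"
    using assms by (auto simp: abs_if algebra_simps split: if_splits)
  then have "\<bar>n - m\<bar> * \<bar>a * (n - m)\<bar> \<le> \<bar>n - m\<bar> * \<bar>a*(n+m) + \<beta>\<bar>"
    by (intro mult_left_mono) auto
  then show ?thesis by (simp add: abs_mult power2_eq_square mult_ac)
qed

lemma powr_sq: "0 < x \<Longrightarrow> (x powr a)^2 = x powr (2*a)" for x a :: real
  by (simp add: power2_eq_square powr_add[symmetric])

theorem lemma3p1:
  fixes \<alpha>1 b :: real
  assumes "\<alpha>1 \<noteq> 0" and "b > 3/8"
  shows "\<exists>C::real. C > 0 \<and>
    (\<forall>(P::real) (Q::real) (u::real \<Rightarrow> int \<Rightarrow> complex) (v::real \<Rightarrow> int \<Rightarrow> complex).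
       (\<forall>k. (\<lambda>\<tau>. u \<tau> k) \<in> borel_measurable lborel) \<longrightarrow>
       (\<forall>k. (\<lambda>\<tau>. v \<tau> k) \<in> borel_measurable lborel) \<longrightarrow>
       l2L2e (absconv u v) \<le>
         ennreal C * l2L2 (\<lambda>\<tau> k. complex_of_real (japanese (\<tau> + (\<alpha>1 * of_int k + P)^3) powr b) * u \<tau> k)
                   * l2L2 (\<lambda>\<tau> k. complex_of_real (japanese (\<tau> + (\<alpha>1 * of_int k + Q)^3) powr b) * v \<tau> k))"
proof -
  define b0 where "b0 = min b (7/16)"
  define r where "r = 2*b0"
  define \<sigma> where "\<sigma> = 2*r - 1"
  have r: "3/4 < r" "r < 1" "r \<le> 2*b" using assms(2) by (auto simp: r_def b0_def)
  have rh: "1/2 < r" using r by simp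
  have \<sigma>: "1/2 < \<sigma>" using r by (simp add: \<sigma>_def)
  define c where "c = 3 * \<bar>\<alpha>1\<bar>^3 / 2"
  have c: "0 < c" using assms(1) by (simp add: c_def)
  obtain Cs where Cs: "0 \<le> Cs" and Csb: "\<And>(S::int set) (y::int \<Rightarrow> real). (\<forall>n\<in>S. \<forall>m\<in>S. c * (of_int (n-m))^2 \<le> \<bar>y n - y m\<bar>) \<Longrightarrow>
     (\<integral>\<^sup>+n. ennreal (max 1 \<bar>y n\<bar> powr (-\<sigma>)) * indicator S n \<partial>count_space UNIV) \<le> ennreal Cs"
    using sum_bound[OF c \<sigma>] by blast
  have Ckp: "0 \<le> Ck r" using Ck_pos[OF rh r(2)] .
  define C0 where "C0 = Ck r * (Cs + Cs)"
  define C1 where "C1 = Ck r"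
  have C0: "0 \<le> C0" and C1: "0 \<le> C1" using Ckp Cs by (simp_all add: C0_def C1_def)
  define C where "C = sqrt (C0 + C1 + 1)"
  show ?thesis
  proof (intro exI[of _ C] conjI allI impI)
    show Cpos: "0 < C" using C0 C1 by (simp add: C_def)
    fix P Q :: real and u v :: "real \<Rightarrow> int \<Rightarrow> complex"
    assume um0: "\<forall>k. (\<lambda>\<tau>. u \<tau> k) \<in> borel_measurable lborel"
      and vm0: "\<forall>k. (\<lambda>\<tau>. v \<tau> k) \<in> borel_measurable lborel"
    have um: "(\<lambda>\<tau>. u \<tau> j) \<in> borel_measurable borel" for j using um0 by simp
    have vm: "(\<lambda>\<tau>. v \<tau> j) \<in> borel_measurable borel" for j using vm0 by simp
    define A where "A j = \<alpha>1 * of_int j + P" for j :: int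
    define B where "B j = \<alpha>1 * of_int j + Q" for j :: int
    define f where "f s j = japanese (s + (A j)^3) powr b * cmod (u s j)" for s j
    define g where "g s j = japanese (s + (B j)^3) powr b * cmod (v s j)" for s j
    define ku where "ku s j = japanese (s + (A j)^3) powr (-b)" for s j
    define kv where "kv s j = japanese (s + (B j)^3) powr (-b)" for s j
    define Y where "Y \<tau> k k' = \<tau> + (A (k-k'))^3 + (B k')^3" for \<tau> k k'
    define m where "m \<tau> k k' = ennreal (Ck r * max 1 \<bar>Y \<tau> k k'\<bar> powr (1-2*r))" for \<tau> k k'
    define Bad where "Bad = {k::int. \<bar>\<alpha>1 * of_int k + P + Q\<bar> < \<bar>\<alpha>1\<bar>/2}"
    have jm: "(\<lambda>s. japanese (s + z) powr e) \<in> borel_measurable borel" for z e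
      unfolding japanese_def by measurable
    have main: "(\<integral>\<^sup>+k. \<integral>\<^sup>+\<tau>. (\<integral>\<^sup>+k'. \<integral>\<^sup>+\<tau>'. ennreal (f (\<tau>-\<tau>') (k-k') * ku (\<tau>-\<tau>') (k-k') * (g \<tau>' k' * kv \<tau>' k')) \<partial>lborel \<partial>count_space UNIV)^2 \<partial>lborel \<partial>count_space UNIV)
      \<le> ennreal (C0 + C1) * (\<integral>\<^sup>+k. \<integral>\<^sup>+\<tau>. ennreal ((f \<tau> k)^2) \<partial>lborel \<partial>count_space UNIV) * (\<integral>\<^sup>+k. \<integral>\<^sup>+\<tau>. ennreal ((g \<tau> k)^2) \<partial>lborel \<partial>count_space UNIV)"
    proof (rule bilinear[where m=m and Bad=Bad])
      show "0 \<le> f \<tau> j" "0 \<le> g \<tau> j" "0 \<le> ku \<tau> j" "0 \<le> kv \<tau> j" for \<tau> j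
        by (simp_all add: f_def g_def ku_def kv_def)
      show "(\<lambda>\<tau>. f \<tau> j) \<in> borel_measurable borel" for j
        unfolding f_def by (intro borel_measurable_times jm measurable_compose[OF um borel_measurable_norm])
      show "(\<lambda>\<tau>. g \<tau> j) \<in> borel_measurable borel" for j
        unfolding g_def by (intro borel_measurable_times jm measurable_compose[OF vm borel_measurable_norm])
      show "(\<lambda>\<tau>. ku \<tau> j) \<in> borel_measurable borel" "(\<lambda>\<tau>. kv \<tau> j) \<in> borel_measurable borel" for j
        unfolding ku_def kv_def by (rule jm)+
      show "0 \<le> C0" "0 \<le> C1" by (rule C0, rule C1)
      show "m \<tau> k k' \<le> ennreal C1" for \<tau> k k'
      proof -
        have "max 1 \<bar>Y \<tau> k k'\<bar> powr (1-2*r) \<le> 1 powr (1-2*r)"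
          by (rule powr_mono2') (use r in auto)
        then have "Ck r * max 1 \<bar>Y \<tau> k k'\<bar> powr (1-2*r) \<le> Ck r"
          using Ckp mult_left_mono[of _ 1 "Ck r"] by simp
        then show ?thesis unfolding m_def C1_def by (rule ennreal_leI)
      qed
      show "k1 = k2" if "k1 \<in> Bad" "k2 \<in> Bad" for k1 k2
      proof -
        have "\<bar>\<alpha>1\<bar> * \<bar>of_int (k1 - k2)\<bar> = \<bar>(\<alpha>1 * of_int k1 + P + Q) - (\<alpha>1 * of_int k2 + P + Q)\<bar>"
          by (simp add: abs_mult[symmetric] algebra_simps)
        also have "\<dots> \<le> \<bar>\<alpha>1 * of_int k1 + P + Q\<bar> + \<bar>\<alpha>1 * of_int k2 + P + Q\<bar>" by (rule abs_triangle_ineq4)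
        also have "\<dots> < \<bar>\<alpha>1\<bar>" using that unfolding Bad_def by auto
        finally have "\<bar>of_int (k1 - k2)::real\<bar> < 1" using assms(1) by simp
        then show ?thesis by linarith
      qed
      show "(\<integral>\<^sup>+\<tau>'. ennreal ((ku (\<tau>-\<tau>') (k-k') * kv \<tau>' k')^2) \<partial>lborel) \<le> m \<tau> k k'" for \<tau> k k'
      proof -
        define a3 where "a3 = (A (k-k'))^3"
        define q where "q = (B k')^3"
        define h where "h x = ennreal (japanese (\<tau> - x + a3) powr (-r) * japanese (x + q) powr (-r))" for x
        have hm: "h \<in> borel_measurable borel" unfolding h_def japanese_def by measurable
        have "(\<integral>\<^sup>+\<tau>'. ennreal ((ku (\<tau>-\<tau>') (k-k') * kv \<tau>' k')^2) \<partial>lborel) \<le> (\<integral>\<^sup>+\<tau>'. h \<tau>' \<partial>lborel)"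
        proof (unfold h_def, intro nn_integral_mono ennreal_leI)
          fix x
          have "(ku (\<tau>-x) (k-k') * kv x k')^2 = japanese (\<tau> - x + a3) powr (-2*b) * japanese (x + q) powr (-2*b)"
            unfolding ku_def kv_def a3_def q_def power_mult_distrib
            by (simp add: powr_sq jap_pos)
          also have "\<dots> \<le> japanese (\<tau> - x + a3) powr (-r) * japanese (x + q) powr (-r)"
            by (intro mult_mono powr_mono jap_ge1) (use r in auto)
          finally show "(ku (\<tau>-x) (k-k') * kv x k')^2 \<le> japanese (\<tau> - x + a3) powr (-r) * japanese (x + q) powr (-r)" .
        qed
        also have "\<dots> = (\<integral>\<^sup>+x. h (-q + 1 * x) \<partial>lborel)"
          using nn_integral_real_affine[OF hm, of 1 "-q"] by simp
        also have "\<dots> = (\<integral>\<^sup>+x. ennreal (japanese (Y \<tau> k k' - x) powr (-r) * japanese x powr (-r)) \<partial>lborel)"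
          by (intro nn_integral_cong) (simp add: h_def Y_def a3_def q_def algebra_simps)
        also have "\<dots> \<le> m \<tau> k k'"
          unfolding m_def by (rule kernel_int) (use r in auto)
        finally show ?thesis .
      qed
      show "(\<integral>\<^sup>+k'. m \<tau> k k' \<partial>count_space UNIV) \<le> ennreal C0" if kB: "k \<notin> Bad" for \<tau> k
      proof -
        define a where "a = 3*\<alpha>1^2*(A k + Q)"
        define \<beta> where "\<beta> = 3*\<alpha>1*(Q^2 - (A k)^2)"
        define y where "y n = Y \<tau> k n" for n
        have ca: "c \<le> \<bar>a\<bar>"
        proof -
          have "\<bar>\<alpha>1\<bar>/2 \<le> \<bar>A k + Q\<bar>" using kB unfolding Bad_def A_def by (simp add: add.assoc)
          then have "3*\<alpha>1^2 * (\<bar>\<alpha>1\<bar>/2) \<le> 3*\<alpha>1^2 * \<bar>A k + Q\<bar>" by (intro mult_left_mono) auto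
          moreover have "\<bar>a\<bar> = 3*\<alpha>1^2 * \<bar>A k + Q\<bar>" unfolding a_def by (simp add: abs_mult)
          moreover have "\<bar>\<alpha>1\<bar>^3 = \<alpha>1^2 * \<bar>\<alpha>1\<bar>"
            by (simp only: power3_eq_cube power2_eq_square abs_mult_self_eq)
          ultimately show ?thesis unfolding c_def by simp
        qed
        have ydiff: "y n - y n' = (of_int n - of_int n') * (a * (of_int n + of_int n') + \<beta>)" for n n'
        proof -
          have An: "A (k - j) = A k - \<alpha>1 * of_int j" for j unfolding A_def by (simp add: algebra_simps)
          show ?thesis unfolding y_def Y_def An B_def a_def \<beta>_def
            using cubic_diff[of "A k" \<alpha>1 "of_int n" Q "of_int n'"] by (simp add: algebra_simps)
        qed
        have sep: "\<forall>n\<in>S. \<forall>n'\<in>S. c * (of_int (n-n'))^2 \<le> \<bar>y n - y n'\<bar>"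
          if "S = {n. 0 \<le> 2*a * of_int n + \<beta>} \<or> S = {n. 2*a * of_int n + \<beta> < 0}" for S
        proof (intro ballI)
          fix n n' assume "n \<in> S" "n' \<in> S"
          then have br: "(0 \<le> 2*a * of_int n + \<beta> \<and> 0 \<le> 2*a * of_int n' + \<beta>) \<or> (2*a * of_int n + \<beta> < 0 \<and> 2*a * of_int n' + \<beta> < 0)"
            using that by auto
          have "c * (of_int (n-n'))^2 \<le> \<bar>a\<bar> * (of_int n - of_int n')^2"
            using ca by (simp add: mult_right_mono)
          also have "\<dots> \<le> \<bar>y n - y n'\<bar>" unfolding ydiff by (rule branch_sep[OF br])
          finally show "c * (of_int (n-n'))^2 \<le> \<bar>y n - y n'\<bar>" .
        qed
        define Sp where "Sp = {n. 0 \<le> 2*a * of_int n + \<beta>}"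
        define Sm where "Sm = {n. 2*a * of_int n + \<beta> < 0}"
        have "(\<integral>\<^sup>+k'. m \<tau> k k' \<partial>count_space UNIV)
            = (\<integral>\<^sup>+k'. ennreal (Ck r) * (ennreal (max 1 \<bar>y k'\<bar> powr (-\<sigma>)) * indicator Sp k' + ennreal (max 1 \<bar>y k'\<bar> powr (-\<sigma>)) * indicator Sm k') \<partial>count_space UNIV)"
          by (intro nn_integral_cong)
             (auto simp: m_def y_def \<sigma>_def Sp_def Sm_def indicator_def ennreal_mult Ckp)
        also have "\<dots> = ennreal (Ck r) * ((\<integral>\<^sup>+k'. ennreal (max 1 \<bar>y k'\<bar> powr (-\<sigma>)) * indicator Sp k' \<partial>count_space UNIV) + (\<integral>\<^sup>+k'. ennreal (max 1 \<bar>y k'\<bar> powr (-\<sigma>)) * indicator Sm k' \<partial>count_space UNIV))"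
          by (simp add: nn_integral_cmult nn_integral_add)
        also have "\<dots> \<le> ennreal (Ck r) * (ennreal Cs + ennreal Cs)"
          by (intro mult_left_mono add_mono Csb sep) (auto simp: Sp_def Sm_def)
        also have "\<dots> = ennreal C0"
        proof -
          have e1: "ennreal (Cs + Cs) = ennreal Cs + ennreal Cs" by (rule ennreal_plus) (simp_all add: Cs)
          have "ennreal C0 = ennreal (Ck r) * ennreal (Cs + Cs)" unfolding C0_def by (rule ennreal_mult) (simp_all add: Cs Ckp)
          then show ?thesis by (simp only: e1)
        qed
        finally show ?thesis .
      qed
    qed
    have cu: "cmod (u s j) = f s j * ku s j" for s j
      unfolding f_def ku_def by (simp add: powr_add[symmetric] jap_pos[THEN less_imp_le] jap_pos[THEN order.strict_implies_not_eq, symmetric]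
         mult.commute[of _ "cmod _"] mult.assoc) 
    have cv: "cmod (v s j) = g s j * kv s j" for s j
      unfolding g_def kv_def using jap_pos[of "s + B j ^ 3"] by (simp add: powr_add[symmetric] mult.commute[of _ "cmod _"] mult.assoc)
    have conv: "absconv u v \<tau> k = (\<integral>\<^sup>+k'. \<integral>\<^sup>+\<tau>'. ennreal (f (\<tau>-\<tau>') (k-k') * ku (\<tau>-\<tau>') (k-k') * (g \<tau>' k' * kv \<tau>' k')) \<partial>lborel \<partial>count_space UNIV)" for \<tau> k
      unfolding absconv_def cu cv by simp
    have nu: "l2L2 (\<lambda>\<tau> k. complex_of_real (japanese (\<tau> + (\<alpha>1 * of_int k + P)^3) powr b) * u \<tau> k)
        = ennsqrt (\<integral>\<^sup>+k. \<integral>\<^sup>+\<tau>. ennreal ((f \<tau> k)^2) \<partial>lborel \<partial>count_space UNIV)"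
      unfolding l2L2_def f_def A_def by (simp add: norm_mult)
    have nv: "l2L2 (\<lambda>\<tau> k. complex_of_real (japanese (\<tau> + (\<alpha>1 * of_int k + Q)^3) powr b) * v \<tau> k)
        = ennsqrt (\<integral>\<^sup>+k. \<integral>\<^sup>+\<tau>. ennreal ((g \<tau> k)^2) \<partial>lborel \<partial>count_space UNIV)"
      unfolding l2L2_def g_def B_def by (simp add: norm_mult)
    have CC: "ennsqrt (ennreal (C0 + C1)) \<le> ennreal C"
    proof -
      have "C^2 = C0 + C1 + 1" unfolding C_def by (rule real_sqrt_pow2) (use C0 C1 in linarith)
      then have "C0 + C1 \<le> C^2" by linarith
      then have "ennreal (C0 + C1) \<le> ennreal (C^2)" by (rule ennreal_leI)
      also have "ennreal (C^2) = (ennreal C)^2" using Cpos by (simp add: ennreal_power)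
      finally have "ennreal (C0 + C1) \<le> (ennreal C)^2" .
      then have "ennsqrt (ennreal (C0 + C1)) \<le> ennsqrt ((ennreal C)^2)" by (simp only: ennsqrt_le_iff)
      then show ?thesis by (simp only: ennsqrt_of_sq)
    qed
    have "l2L2e (absconv u v) \<le> ennsqrt (ennreal (C0 + C1) * (\<integral>\<^sup>+k. \<integral>\<^sup>+\<tau>. ennreal ((f \<tau> k)^2) \<partial>lborel \<partial>count_space UNIV) * (\<integral>\<^sup>+k. \<integral>\<^sup>+\<tau>. ennreal ((g \<tau> k)^2) \<partial>lborel \<partial>count_space UNIV))"
      unfolding l2L2e_def conv ennsqrt_le_iff by (rule main)
    also have "\<dots> \<le> ennreal C * l2L2 (\<lambda>\<tau> k. complex_of_real (japanese (\<tau> + (\<alpha>1 * of_int k + P)^3) powr b) * u \<tau> k)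
                   * l2L2 (\<lambda>\<tau> k. complex_of_real (japanese (\<tau> + (\<alpha>1 * of_int k + Q)^3) powr b) * v \<tau> k)"
      unfolding nu nv ennsqrt_mult by (intro mult_right_mono CC zero_le)
    finally show "l2L2e (absconv u v) \<le> ennreal C * l2L2 (\<lambda>\<tau> k. complex_of_real (japanese (\<tau> + (\<alpha>1 * of_int k + P)^3) powr b) * u \<tau> k)
                   * l2L2 (\<lambda>\<tau> k. complex_of_real (japanese (\<tau> + (\<alpha>1 * of_int k + Q)^3) powr b) * v \<tau> k)" .
  qed
qed

end
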